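(* Let $G=(V,E)$ be a finite undirected graph with $V=\{1,\dots,p\}$. Then the following are equivalent: (i) for every symmetric positive semidefinite $p\times p$ real matrix $A$ with $\det A=0$, the thresholded matrix $A_G$ is positive semidefinite; (ii) $G=\bigcup_{i=1}^{\tau} G_i$ for some $\tau\in\mathbb{N}$, where $G_1,\dots,G_\tau$ are pairwise disconnected complete graphs (equivalently, every connected component of $G$ is a complete graph).
   Context: For a symmetric $p\times p$ real matrix $A=(a_{ij})$ and an undirected graph $G=(V,E)$ on $V=\{1,\dots,p\}$, the matrix $A_G$ is defined by $(A_G)_{ij}=a_{ij}$ if $i=j$ or $(i,j)\in E$, and $(A_G)_{ij}=0$ otherwise. *)

theory Defs
  imports "HOL-Analysis.Analysis"
begin

definition psd :: "real^'n^'n \<Rightarrow> bool" where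
  "psd A \<longleftrightarrow> transpose A = A \<and> (\<forall>x. 0 \<le> x \<bullet> (A *v x))"

definition threshold :: "('n \<Rightarrow> 'n \<Rightarrow> bool) \<Rightarrow> real^'n^'n \<Rightarrow> real^'n^'n" where
  "threshold E A = (\<chi> i j. if i = j \<or> E i j then A $ i $ j else 0)"

definition components_complete :: "('n \<Rightarrow> 'n \<Rightarrow> bool) \<Rightarrow> bool" where
  "components_complete E \<longleftrightarrow> (\<forall>i j. E\<^sup>*\<^sup>* i j \<longrightarrow> i \<noteq> j \<longrightarrow> E i j)"

end

theory Submission
  imports Defs
begin

lemma path_lemma:
  assumes "E\<^sup>*\<^sup>* a b" "a \<noteq> b"
  shows "E a b \<or> (\<exists>i j k. i\<noteq>j \<and> j\<noteq>k \<and> i\<noteq>k \<and> E i j \<and> E j k \<and> \<not> E i k)"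
  using assms
proof (induction rule: rtranclp_induct)
  case base then show ?case by simp
next
  case (step c b)
  show ?case
  proof (cases "a = c")
    case True then show ?thesis using step by simp
  next
    case False
    with step.IH have "E a c \<or> (\<exists>i j k. i\<noteq>j \<and> j\<noteq>k \<and> i\<noteq>k \<and> E i j \<and> E j k \<and> \<not> E i k)"
      by simp
    then show ?thesis
    proof
      assume ac: "E a c"
      show ?thesis
      proof (cases "E a b")
        case True then show ?thesis by simp
      next
        case nab: False
        have "c \<noteq> b" using ac nab by auto
        then show ?thesis using \<open>a \<noteq> c\<close> step.prems step.hyps(2) ac nab by blast
      qed
    qed simp
  qed
qed

lemma sum_UNIV_supp:
  fixes f :: "'n::finite \<Rightarrow> real"
  assumes "\<And>a. a \<notin> S \<Longrightarrow> f a = 0"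
  shows "(\<Sum>a\<in>UNIV. f a) = sum f S"
  by (rule sum.mono_neutral_right) (auto simp: assms)

lemma counterexample:
  fixes E :: "'n::finite \<Rightarrow> 'n \<Rightarrow> bool"
  assumes "symp E" "i\<noteq>j" "j\<noteq>k" "i\<noteq>k" "E i j" "E j k" "\<not> E i k"
  shows "\<exists>A::real^'n^'n. psd A \<and> det A = 0 \<and> \<not> psd (threshold E A)"
proof -
  have Eji: "E j i" and Ekj: "E k j" and nEki: "\<not> E k i"
    using assms by (auto dest: sympD)
  define u :: "real^'n" where "u = (\<chi> a. if a \<in> {i,j,k} then 1 else 0)"
  define A :: "real^'n^'n" where "A = (\<chi> a b. u$a * u$b)"
  have Av: "A *v x = (u \<bullet> x) *\<^sub>R u" for x
    by (simp add: A_def vec_eq_iff matrix_vector_mult_def inner_vec_def sum_distrib_left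
        mult.commute mult.left_commute)
  have psdA: "psd A"
    unfolding psd_def
  proof
    show "transpose A = A" by (simp add: A_def transpose_def vec_eq_iff mult.commute)
    show "\<forall>x. 0 \<le> x \<bullet> (A *v x)" by (simp add: Av inner_commute)
  qed
  define y :: "real^'n" where "y = (\<chi> a. if a = i then 1 else if a = j then -1 else 0)"
  have "y \<noteq> 0" by (auto simp: y_def vec_eq_iff intro!: exI[of _ i])
  have uy: "\<And>a. u$a * y$a = (if a = i then 1 else 0) - (if a = j then 1 else 0)"
    using assms by (auto simp: u_def y_def)
  have "u \<bullet> y = 0"
    by (simp add: inner_vec_def uy sum_subtractf)
  then have "A *v y = A *v 0" by (simp add: Av)
  have detA: "det A = 0"
  proof (rule ccontr)
    assume "det A \<noteq> 0"
    then have "invertible A" using invertible_det_nz by blast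
    then have "inj ((*v) A)"
      using matrix_left_invertible_injective invertible_def by blast
    from injD[OF this \<open>A *v y = A *v 0\<close>] \<open>y \<noteq> 0\<close> show False by simp
  qed
  define x :: "real^'n" where
    "x = (\<chi> a. if a = i then 1 else if a = j then -1 else if a = k then 1 else 0)"
  let ?T = "threshold E A"
  have inner: "(\<Sum>b\<in>UNIV. ?T$a$b * x$b) = (\<Sum>b\<in>{i,j,k}. ?T$a$b * x$b)" for a
    by (rule sum_UNIV_supp) (auto simp: x_def)
  have "x \<bullet> (?T *v x) = (\<Sum>a\<in>UNIV. x$a * (\<Sum>b\<in>UNIV. ?T$a$b * x$b))"
    by (simp add: inner_vec_def matrix_vector_mult_def)
  also have "\<dots> = (\<Sum>a\<in>{i,j,k}. x$a * (\<Sum>b\<in>{i,j,k}. ?T$a$b * x$b))"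
    unfolding inner by (rule sum_UNIV_supp) (auto simp: x_def)
  also have "\<dots> = -1"
    using assms Eji Ekj nEki
    by (simp add: x_def threshold_def A_def u_def)
  finally have val: "x \<bullet> (?T *v x) = -1" .
  have "\<not> psd ?T"
  proof
    assume "psd ?T"
    then have "0 \<le> x \<bullet> (?T *v x)" by (simp add: psd_def)
    with val show False by simp
  qed
  with psdA detA show ?thesis by blast
qed

lemma psd_threshold:
  fixes A :: "real^'n::finite^'n"
  assumes "symp E" "components_complete E" "psd A"
  shows "psd (threshold E A)"
proof -
  define R where "R a b = (a = b \<or> E a b)" for a b
  have Rrefl: "R a a" for a by (simp add: R_def)
  have Rsym: "R a b \<Longrightarrow> R b a" for a b using assms(1) by (auto simp: R_def dest: sympD)
  have Rtrans: "R a b \<Longrightarrow> R b c \<Longrightarrow> R a c" for a b c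
  proof -
    assume "R a b" "R b c"
    then have "E\<^sup>*\<^sup>* a c" unfolding R_def by auto
    then show "R a c" using assms(2) unfolding components_complete_def R_def by blast
  qed
  define c where "c i = real (card {k. R i k})" for i
  have cpos: "c i > 0" for i
  proof -
    have "i \<in> {k. R i k}" using Rrefl by simp
    then have "card {k. R i k} > 0" by (auto simp: card_gt_0_iff)
    then show ?thesis by (simp add: c_def)
  qed
  define w where "w i a b = (if R i a \<and> R i b then 1 / c i else 0)" for i a b
  have key: "(\<Sum>i\<in>UNIV. w i a b) = (if R a b then 1 else 0)" for a b
  proof (cases "R a b")
    case True
    have "(\<Sum>i\<in>UNIV. w i a b) = (\<Sum>i\<in>UNIV. if R a i then 1 / c a else 0)"
    proof (rule sum.cong[OF refl])
      fix i
      have eq: "R i a \<and> R i b \<longleftrightarrow> R a i"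
      proof
        assume "R i a \<and> R i b" then show "R a i" using Rsym by blast
      next
        assume "R a i"
        then have "R i a" by (rule Rsym)
        moreover from this True have "R i b" by (rule Rtrans)
        ultimately show "R i a \<and> R i b" ..
      qed
      have "{k. R i k} = {k. R a k}" if "R a i"
      proof (rule set_eqI, rule iffI)
        fix k assume "k \<in> {k. R i k}"
        then have "R i k" by simp
        with that have "R a k" by (rule Rtrans)
        then show "k \<in> {k. R a k}" by simp
      next
        fix k assume "k \<in> {k. R a k}"
        then have "R a k" by simp
        with Rsym[OF that] have "R i k" by (rule Rtrans)
        then show "k \<in> {k. R i k}" by simp
      qed
      then have "R a i \<Longrightarrow> c i = c a" by (simp add: c_def)
      then show "w i a b = (if R a i then 1 / c a else 0)" by (simp add: w_def eq)
    qed
    also have "\<dots> = 1"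
    proof -
      have "card {i. R a i} \<noteq> 0" using Rrefl[of a] by (auto simp: card_eq_0_iff)
      then show ?thesis by (simp add: sum.If_cases c_def)
    qed
    finally show ?thesis using True by simp
  next
    case False
    have nR: "\<not> (R i a \<and> R i b)" for i
    proof
      assume "R i a \<and> R i b"
      then have "R a b" using Rsym Rtrans by blast
      with False show False by simp
    qed
    have "\<And>i. w i a b = 0" unfolding w_def using nR by auto
    then show ?thesis using False by simp
  qed
  define y where "y i x = (\<chi> a. if R i a then x$a else 0)" for i and x :: "real^'n"
  have "transpose (threshold E A) = threshold E A"
  proof -
    have "transpose A = A" using assms(3) by (simp add: psd_def)
    then have "A$b$a = A$a$b" for a b by (metis transpose_def vec_lambda_beta)
    then show ?thesis using assms(1)
      by (auto simp: transpose_def threshold_def vec_eq_iff dest: sympD)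
  qed
  moreover have "0 \<le> x \<bullet> (threshold E A *v x)" for x
  proof -
    define f where "f a b = x$a * A$a$b * x$b" for a b
    have "x \<bullet> (threshold E A *v x) = (\<Sum>a\<in>UNIV. \<Sum>b\<in>UNIV. (if R a b then 1 else 0) * f a b)"
      unfolding inner_vec_def matrix_vector_mult_def inner_real_def
      by (auto simp: sum_distrib_left threshold_def R_def f_def intro!: sum.cong)
    also have "\<dots> = (\<Sum>a\<in>UNIV. \<Sum>b\<in>UNIV. \<Sum>i\<in>UNIV. w i a b * f a b)"
      by (simp only: key[symmetric] sum_distrib_right)
    also have "\<dots> = (\<Sum>a\<in>UNIV. \<Sum>i\<in>UNIV. \<Sum>b\<in>UNIV. w i a b * f a b)"
      by (rule sum.cong[OF refl], rule sum.swap)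
    also have "\<dots> = (\<Sum>i\<in>UNIV. \<Sum>a\<in>UNIV. \<Sum>b\<in>UNIV. w i a b * f a b)"
      by (rule sum.swap)
    also have "\<dots> = (\<Sum>i\<in>UNIV. (1 / c i) * (y i x \<bullet> (A *v y i x)))"
    proof (rule sum.cong[OF refl])
      fix i
      have "(1 / c i) * (y i x \<bullet> (A *v y i x))
          = (\<Sum>a\<in>UNIV. \<Sum>b\<in>UNIV. (1 / c i) * ((y i x)$a * (A$a$b * (y i x)$b)))"
        unfolding inner_vec_def matrix_vector_mult_def inner_real_def
        by (simp add: sum_distrib_left)
      also have "\<dots> = (\<Sum>a\<in>UNIV. \<Sum>b\<in>UNIV. w i a b * f a b)"
        by (intro sum.cong refl) (simp add: w_def y_def f_def)
      finally show "(\<Sum>a\<in>UNIV. \<Sum>b\<in>UNIV. w i a b * f a b) = (1 / c i) * (y i x \<bullet> (A *v y i x))"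
        by simp
    qed
    also have "\<dots> \<ge> 0"
      using assms(3) cpos by (intro sum_nonneg mult_nonneg_nonneg) (auto simp: psd_def less_imp_le)
    finally show ?thesis .
  qed
  ultimately show ?thesis by (simp add: psd_def)
qed

theorem corollary3:
  fixes E :: "'n::finite \<Rightarrow> 'n \<Rightarrow> bool"
  assumes "symp E"
  shows "(\<forall>A::real^'n^'n. psd A \<and> det A = 0 \<longrightarrow> psd (threshold E A))
         \<longleftrightarrow> components_complete E"
proof
  assume H: "\<forall>A::real^'n^'n. psd A \<and> det A = 0 \<longrightarrow> psd (threshold E A)"
  show "components_complete E"
    unfolding components_complete_def
  proof (intro allI impI)
    fix a b assume ab: "E\<^sup>*\<^sup>* a b" "a \<noteq> b"
    show "E a b"
    proof (rule ccontr)
      assume nab: "\<not> E a b"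
      from path_lemma[OF ab] nab obtain i j k where
        ijk: "i\<noteq>j" "j\<noteq>k" "i\<noteq>k" "E i j" "E j k" "\<not> E i k"
        by auto
      obtain A :: "real^'n^'n" where A: "psd A" "det A = 0" "\<not> psd (threshold E A)"
        using counterexample[OF assms ijk] by auto
      have "psd (threshold E A)" using H A(1,2) by simp
      with A(3) show False by simp
    qed
  qed
next
  assume cc: "components_complete E"
  show "\<forall>A::real^'n^'n. psd A \<and> det A = 0 \<longrightarrow> psd (threshold E A)"
  proof (intro allI impI)
    fix A :: "real^'n^'n" assume "psd A \<and> det A = 0"
    then show "psd (threshold E A)" using psd_threshold[OF assms cc] by simp
  qed
qed

end
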